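(* For $i=1,\dots,n$ let $A_i\in\mathbb{R}^{m_i\times r}$, $b_i\in\mathbb{R}^{m_i}$ and let $X_i\subset\mathbb{R}^r$ be closed convex, $X=\bigcap_i X_i$. Suppose the set $\mathbf{X}^*=\{x\in X: A_ix-b_i\le0 \text{ (componentwise) for all } i\}$ is non-empty. Let $n$ agents communicate over a fixed directed strongly connected graph with nonnegative weights $a_{ij}$ ($a_{ij}>0$ iff $j\in N_i$), and let $\tau>0$. Let $x_i(t)\in\mathbb{R}^r$ evolve according to $$\dot x_i(t)=\sum_{j\in N_i}a_{ij}(x_j(t)-x_i(t))-\tau\Big(A_i^T(A_ix_i(t)-b_i)^+ + x_i(t)-P_{X_i}(x_i(t))\Big),\quad i=1,\dots,n.$$ Then there is a vector $x^*\in\mathbf{X}^*$ such that $\lim_{t\to\infty}x_i(t)=x^*$ for all $i$.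
   Context: For a vector $y=[y_1,\dots,y_k]^T$, $y^+=[\max(y_1,0),\dots,\max(y_k,0)]^T$. $P_{X_i}$ is the Euclidean projection onto $X_i$. *)

theory Defs
  imports "HOL-Analysis.Analysis"
begin

text \<open>Agents are indexed by a finite type 'n (n = CARD('n) agents); vectors live in
  real^'r.  The matrix A_i (m_i x r) is given by its rows A i k (k < m i), b_i by b i k.\<close>

text \<open>Communication graph: j is an in-neighbour of i (j in N_i) iff a i j > 0.
  Strong connectivity: every node reaches every other along edges.\<close>
definition strongly_connected :: "('n \<Rightarrow> 'n \<Rightarrow> real) \<Rightarrow> bool" where
  "strongly_connected a \<longleftrightarrow> (\<forall>i j. (i, j) \<in> {(u, v). a v u > 0}\<^sup>*)"

definition neighbours :: "('n \<Rightarrow> 'n \<Rightarrow> real) \<Rightarrow> 'n \<Rightarrow> 'n set" where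
  "neighbours a i = {j. a i j > 0}"

definition mat_row_app :: "(nat \<Rightarrow> real^'r) \<Rightarrow> real^'r \<Rightarrow> nat \<Rightarrow> real" where
  "mat_row_app Ai y k = Ai k \<bullet> y"

text \<open>A_i^T (A_i y - b_i)^+ written out: sum over rows k < m_i.\<close>
definition penalty_grad :: "nat \<Rightarrow> (nat \<Rightarrow> real^'r) \<Rightarrow> (nat \<Rightarrow> real) \<Rightarrow> real^'r \<Rightarrow> real^'r" where
  "penalty_grad mi Ai bi y = (\<Sum>k<mi. max (mat_row_app Ai y k - bi k) 0 *\<^sub>R Ai k)"

definition feasible_set ::
  "('n \<Rightarrow> (real^'r) set) \<Rightarrow> ('n \<Rightarrow> nat) \<Rightarrow> ('n \<Rightarrow> nat \<Rightarrow> real^'r) \<Rightarrow> ('n \<Rightarrow> nat \<Rightarrow> real) \<Rightarrow> (real^'r) set" where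
  "feasible_set X m A b = {y \<in> (\<Inter>i. X i). \<forall>i. \<forall>k<m i. mat_row_app (A i) y k - b i k \<le> 0}"

end

theory Submission
  imports Defs
begin


lemma perron:
  fixes a :: "'n::finite \<Rightarrow> 'n \<Rightarrow> real"
  assumes anonneg: "\<And>i j. a i j \<ge> 0" and strong: "strongly_connected a"
  shows "\<exists>p. (\<forall>i. p i > 0) \<and> (\<forall>j. (\<Sum>i\<in>UNIV. p i * a i j) = p j * (\<Sum>k\<in>UNIV. a j k))"
proof -
  define d where "d j = (\<Sum>k\<in>UNIV. a j k)" for j
  have dnn: "d j \<ge> 0" for j unfolding d_def by (simp add: anonneg sum_nonneg)
  define e where "e = 1 / (1 + (\<Sum>j\<in>UNIV. d j))"
  have sd: "(\<Sum>j\<in>UNIV. d j) \<ge> 0" by (simp add: dnn sum_nonneg)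
  have epos: "e > 0" unfolding e_def using sd by simp
  have ed: "e * d j \<le> 1" for j
  proof -
    have "d j \<le> (\<Sum>j\<in>UNIV. d j)" by (rule member_le_sum) (auto simp: dnn)
    then have "d j \<le> 1 + (\<Sum>j\<in>UNIV. d j)" by simp
    then show ?thesis unfolding e_def using sd by (simp add: field_simps)
  qed
  define S where "S = {q::real^'n. (\<forall>i. 0 \<le> q$i) \<and> (\<Sum>i\<in>UNIV. q$i) = 1}"
  define f where "f q = (\<chi> j. q$j + e * ((\<Sum>i\<in>UNIV. q$i * a i j) - q$j * d j))" for q :: "real^'n"
  have closedS: "closed S"
  proof -
    have "S = (\<Inter>i. {q. 0 \<le> q$i}) \<inter> {q. (\<Sum>i\<in>UNIV. q$i) = 1}" unfolding S_def by auto
    moreover have "closed {q::real^'n. (\<Sum>i\<in>UNIV. q$i) = 1}"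
      by (rule closed_Collect_eq) (auto intro!: continuous_intros)
    moreover have "closed {q::real^'n. 0 \<le> q$i}" for i
      by (rule closed_Collect_le) (auto intro!: continuous_intros)
    ultimately show ?thesis by auto
  qed
  have boundedS: "bounded S"
  proof -
    have "norm q \<le> 1" if "q \<in> S" for q
    proof -
      have "norm q \<le> (\<Sum>i\<in>UNIV. \<bar>q$i\<bar>)" by (rule norm_le_l1_cart)
      also have "\<dots> = 1" using that unfolding S_def by auto
      finally show ?thesis .
    qed
    then show ?thesis unfolding bounded_iff by blast
  qed
  have convS: "convex S"
    unfolding convex_def S_def
    by (auto simp: sum.distrib sum_distrib_left[symmetric])
  have neS: "S \<noteq> {}"
  proof -
    have "(\<chi> i. 1 / real CARD('n)) \<in> S" unfolding S_def by auto
    then show ?thesis by blast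
  qed
  have contf: "continuous_on S f" unfolding f_def by (intro continuous_intros)
  have fS: "f \<in> S \<rightarrow> S"
  proof
    fix q assume q: "q \<in> S"
    have "f q $ j \<ge> 0" for j
    proof -
      have "f q $ j = q$j * (1 - e * d j) + e * (\<Sum>i\<in>UNIV. q$i * a i j)"
        unfolding f_def by (simp add: algebra_simps)
      moreover have "q$j * (1 - e * d j) \<ge> 0" using q ed[of j] unfolding S_def by simp
      moreover have "e * (\<Sum>i\<in>UNIV. q$i * a i j) \<ge> 0"
        using q epos anonneg unfolding S_def by (auto intro!: sum_nonneg mult_nonneg_nonneg)
      ultimately show ?thesis by linarith
    qed
    moreover have "(\<Sum>j\<in>UNIV. f q $ j) = 1"
    proof -
      have "(\<Sum>j\<in>UNIV. f q $ j) = (\<Sum>j\<in>UNIV. q$j) + e * ((\<Sum>j\<in>UNIV. \<Sum>i\<in>UNIV. q$i * a i j) - (\<Sum>j\<in>UNIV. q$j * d j))"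
        unfolding f_def by (simp add: sum.distrib sum_distrib_left sum_subtractf algebra_simps)
      also have "(\<Sum>j\<in>UNIV. \<Sum>i\<in>UNIV. q$i * a i j) = (\<Sum>j\<in>UNIV. q$j * d j)"
        unfolding d_def by (subst sum.swap) (simp add: sum_distrib_left)
      finally show ?thesis using q unfolding S_def by simp
    qed
    ultimately show "f q \<in> S" unfolding S_def by auto
  qed
  obtain q where qS: "q \<in> S" and fq: "f q = q"
    using brouwer[OF compact_eq_bounded_closed[THEN iffD2] convS neS contf fS] closedS boundedS by blast
  have stat: "(\<Sum>i\<in>UNIV. q$i * a i j) = q$j * d j" for j
  proof -
    have "f q $ j = q $ j" using fq by simp
    then have "e * ((\<Sum>i\<in>UNIV. q$i * a i j) - q$j * d j) = 0" unfolding f_def by simp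
    then show ?thesis using epos by simp
  qed
  have prop1: "q$v = 0" if "q$u = 0" "a v u > 0" for u v
  proof -
    have "(\<Sum>i\<in>UNIV. q$i * a i u) = 0" using stat[of u] that by simp
    then have "\<forall>i\<in>UNIV. q$i * a i u = 0"
      using qS anonneg unfolding S_def by (subst sum_nonneg_eq_0_iff[symmetric]) auto
    then have "q$v * a v u = 0" by simp
    then show ?thesis using that by simp
  qed
  have propg: "q$w = 0" if "(j, w) \<in> {(u, v). a v u > 0}\<^sup>*" "q$j = 0" for j w
    using that
  proof (induction rule: rtrancl_induct)
    case base then show ?case by simp
  next
    case (step y z) then show ?case using prop1 by auto
  qed
  have pos: "q$j > 0" for j
  proof (rule ccontr)
    assume "\<not> q$j > 0"
    then have "q$j = 0" using qS unfolding S_def by (metis less_eq_real_def mem_Collect_eq)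
    then have "\<forall>w. q$w = 0" using propg strong unfolding strongly_connected_def by blast
    then show False using qS unfolding S_def by simp
  qed
  show ?thesis
    by (rule exI[of _ "\<lambda>i. q$i"]) (use pos stat d_def in auto)
qed



lemma key_ineq:
  fixes y z :: "real^'r"
  assumes cl: "closed Xi" and cv: "convex Xi" and zX: "z \<in> Xi"
    and zA: "\<forall>k<mi. mat_row_app Ai z k - bi k \<le> 0"
  shows "(y - z) \<bullet> (penalty_grad mi Ai bi y + (y - closest_point Xi y))
     \<ge> (\<Sum>k<mi. (max (mat_row_app Ai y k - bi k) 0)\<^sup>2) + (norm (y - closest_point Xi y))\<^sup>2"
proof -
  have A: "(y - z) \<bullet> penalty_grad mi Ai bi y \<ge> (\<Sum>k<mi. (max (mat_row_app Ai y k - bi k) 0)\<^sup>2)"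
  proof -
    have "(y - z) \<bullet> penalty_grad mi Ai bi y = (\<Sum>k<mi. max (mat_row_app Ai y k - bi k) 0 * (mat_row_app Ai y k - mat_row_app Ai z k))"
      unfolding penalty_grad_def mat_row_app_def
      by (simp add: inner_sum_right inner_diff_left inner_diff_right inner_commute)
    also have "\<dots> \<ge> (\<Sum>k<mi. (max (mat_row_app Ai y k - bi k) 0)\<^sup>2)"
    proof (rule sum_mono)
      fix k assume "k \<in> {..<mi}"
      then have "mat_row_app Ai z k \<le> bi k" using zA by auto
      then show "(max (mat_row_app Ai y k - bi k) 0)\<^sup>2 \<le> max (mat_row_app Ai y k - bi k) 0 * (mat_row_app Ai y k - mat_row_app Ai z k)"
        by (cases "mat_row_app Ai y k - bi k \<ge> 0") (auto simp: power2_eq_square intro: mult_left_mono)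
    qed
    finally show ?thesis .
  qed
  have B: "(y - z) \<bullet> (y - closest_point Xi y) \<ge> (norm (y - closest_point Xi y))\<^sup>2"
  proof -
    let ?P = "closest_point Xi y"
    have "(y - ?P) \<bullet> (z - ?P) \<le> 0" by (rule closest_point_dot[OF cv cl zX])
    moreover have "(y - z) \<bullet> (y - ?P) = (y - ?P) \<bullet> (y - ?P) - (y - ?P) \<bullet> (z - ?P)"
      by (simp add: inner_diff_left inner_diff_right inner_commute)
    ultimately show ?thesis by (simp add: power2_norm_eq_inner)
  qed
  show ?thesis using A B by (simp add: inner_add_right)
qed

lemma consensus_identity:
  fixes a :: "'n::finite \<Rightarrow> 'n \<Rightarrow> real" and e :: "'n \<Rightarrow> real^'r"
  assumes stat: "\<And>j. (\<Sum>i\<in>UNIV. p i * a i j) = p j * (\<Sum>k\<in>UNIV. a j k)"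
  shows "(\<Sum>i\<in>UNIV. p i * (2 * (e i \<bullet> (\<Sum>j\<in>UNIV. a i j *\<^sub>R (e j - e i)))))
    = - (\<Sum>i\<in>UNIV. p i * (\<Sum>j\<in>UNIV. a i j * (norm (e j - e i))\<^sup>2))"
proof -
  have pt: "2 * (e i \<bullet> (e j - e i)) = (norm (e j))\<^sup>2 - (norm (e i))\<^sup>2 - (norm (e j - e i))\<^sup>2" for i j
    by (simp add: power2_norm_eq_inner inner_diff_left inner_diff_right inner_commute)
  have pt2: "p i * a i j * (2 * (e i \<bullet> (e j - e i))) = p i * a i j * (norm (e j))\<^sup>2 - p i * a i j * (norm (e i))\<^sup>2 - p i * a i j * (norm (e j - e i))\<^sup>2" for i j
    by (simp add: pt right_diff_distrib)
  have "(\<Sum>i\<in>UNIV. p i * (2 * (e i \<bullet> (\<Sum>j\<in>UNIV. a i j *\<^sub>R (e j - e i)))))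
     = (\<Sum>i\<in>UNIV. \<Sum>j\<in>UNIV. p i * a i j * (2 * (e i \<bullet> (e j - e i))))"
    by (simp add: inner_sum_right sum_distrib_left algebra_simps)
  also have "\<dots> = (\<Sum>i\<in>UNIV. \<Sum>j\<in>UNIV. p i * a i j * (norm (e j))\<^sup>2)
     - (\<Sum>i\<in>UNIV. \<Sum>j\<in>UNIV. p i * a i j * (norm (e i))\<^sup>2)
     - (\<Sum>i\<in>UNIV. \<Sum>j\<in>UNIV. p i * a i j * (norm (e j - e i))\<^sup>2)"
    by (simp only: pt2 sum_subtractf)
  also have "(\<Sum>i\<in>UNIV. \<Sum>j\<in>UNIV. p i * a i j * (norm (e j))\<^sup>2) = (\<Sum>j\<in>UNIV. p j * (\<Sum>k\<in>UNIV. a j k) * (norm (e j))\<^sup>2)"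
    by (subst sum.swap) (simp add: stat sum_distrib_right[symmetric])
  also have "(\<Sum>i\<in>UNIV. \<Sum>j\<in>UNIV. p i * a i j * (norm (e i))\<^sup>2) = (\<Sum>j\<in>UNIV. p j * (\<Sum>k\<in>UNIV. a j k) * (norm (e j))\<^sup>2)"
    by (simp add: sum_distrib_left sum_distrib_right algebra_simps)
  finally show ?thesis by (simp add: sum_distrib_left algebra_simps)
qed

lemma deriv_normsq:
  fixes f :: "real \<Rightarrow> 'a::real_inner"
  assumes "(f has_vector_derivative f') (at t)"
  shows "((\<lambda>t. (norm (f t - z))\<^sup>2) has_real_derivative 2 * ((f t - z) \<bullet> f')) (at t)"
proof -
  have d: "((\<lambda>t. f t - z) has_derivative (\<lambda>h. h *\<^sub>R f')) (at t)"
    using assms unfolding has_vector_derivative_def by (auto intro!: derivative_eq_intros)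
  have "((\<lambda>t. (f t - z) \<bullet> (f t - z)) has_derivative (\<lambda>h. (f t - z) \<bullet> (h *\<^sub>R f') + (h *\<^sub>R f') \<bullet> (f t - z))) (at t)"
    by (rule has_derivative_inner[OF d d])
  then have "((\<lambda>t. (f t - z) \<bullet> (f t - z)) has_derivative (\<lambda>h. (2 * ((f t - z) \<bullet> f')) * h)) (at t)"
    by (rule has_derivative_eq_rhs) (auto simp: inner_commute algebra_simps)
  then show ?thesis unfolding has_field_derivative_def by (simp add: power2_norm_eq_inner)
qed



theorem theorem6:
  fixes X :: "'n::finite \<Rightarrow> (real^'r) set"
    and m :: "'n \<Rightarrow> nat"
    and A :: "'n \<Rightarrow> nat \<Rightarrow> real^'r"
    and b :: "'n \<Rightarrow> nat \<Rightarrow> real"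
    and a :: "'n \<Rightarrow> 'n \<Rightarrow> real"
    and \<tau> :: real
    and x :: "'n \<Rightarrow> real \<Rightarrow> real^'r"
  assumes closedX: "\<And>i. closed (X i)"
    and convexX: "\<And>i. convex (X i)"
    and nonempty: "feasible_set X m A b \<noteq> {}"
    and a_nonneg: "\<And>i j. a i j \<ge> 0"
    and strong: "strongly_connected a"
    and tau_pos: "\<tau> > 0"
    and ode: "\<And>i t. t \<ge> 0 \<Longrightarrow>
      (x i has_vector_derivative
         ((\<Sum>j\<in>neighbours a i. a i j *\<^sub>R (x j t - x i t))
          - \<tau> *\<^sub>R (penalty_grad (m i) (A i) (b i) (x i t)
                      + (x i t - closest_point (X i) (x i t)))))
       (at t within {0..})"
  shows "\<exists>xs \<in> feasible_set X m A b. \<forall>i. (x i \<longlongrightarrow> xs) at_top"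
proof -
  obtain p where ppos: "\<And>i. p i > 0" and stat: "\<And>j. (\<Sum>i\<in>UNIV. p i * a i j) = p j * (\<Sum>k\<in>UNIV. a j k)"
    using perron[OF a_nonneg strong] by blast
  obtain z0 where z0: "z0 \<in> feasible_set X m A b" using nonempty by blast
  have Xne: "X i \<noteq> {}" for i using z0 unfolding feasible_set_def by auto
  define g where "g i y = penalty_grad (m i) (A i) (b i) y + (y - closest_point (X i) y)" for i y
  define Rhs where "Rhs i t = (\<Sum>j\<in>UNIV. a i j *\<^sub>R (x j t - x i t)) - \<tau> *\<^sub>R g i (x i t)" for i t
  define Qf where "Qf i y = (\<Sum>k<m i. (max (mat_row_app (A i) y k - b i k) 0)\<^sup>2) + (norm (y - closest_point (X i) y))\<^sup>2" for i y
  define D where "D y = (\<Sum>i\<in>UNIV. p i * ((\<Sum>j\<in>UNIV. a i j * (norm (y j - y i))\<^sup>2) + 2 * \<tau> * Qf i (y i)))"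
    for y :: "'n \<Rightarrow> real^'r"
  have Qnn: "Qf i y \<ge> 0" for i y unfolding Qf_def by (auto intro!: sum_nonneg add_nonneg_nonneg)
  have Dnn: "D y \<ge> 0" for y unfolding D_def
    by (intro sum_nonneg mult_nonneg_nonneg add_nonneg_nonneg) (use ppos tau_pos Qnn a_nonneg in \<open>auto simp: less_imp_le\<close>)
  have nb: "(\<Sum>j\<in>neighbours a i. a i j *\<^sub>R v j) = (\<Sum>j\<in>UNIV. a i j *\<^sub>R v j)" for i and v :: "'n \<Rightarrow> real^'r"
  proof (rule sum.mono_neutral_left)
    show "\<forall>j\<in>UNIV - neighbours a i. a i j *\<^sub>R v j = 0"
      using a_nonneg unfolding neighbours_def by (auto simp: less_eq_real_def)
  qed auto
  have xd: "(x i has_vector_derivative Rhs i t) (at t)" if "t > 0" for i t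
  proof -
    have "(x i has_vector_derivative Rhs i t) (at t within {0..})"
      using ode[of t i] that unfolding Rhs_def g_def nb by simp
    moreover have "at t within {0..} = at t"
      by (rule at_within_interior) (use that interior_Ici[of "-1::real" 0] in auto)
    ultimately show ?thesis by simp
  qed
  define V where "V z t = (\<Sum>i\<in>UNIV. p i * (norm (x i t - z))\<^sup>2)" for z t
  have dV: "\<exists>D'. DERIV (V z) t :> D' \<and> D' \<le> - D (\<lambda>i. x i t)"
    if zF: "z \<in> feasible_set X m A b" and t: "t > 0" for z t
  proof -
    have der: "DERIV (V z) t :> (\<Sum>i\<in>UNIV. p i * (2 * ((x i t - z) \<bullet> Rhs i t)))"
      unfolding V_def by (intro DERIV_sum DERIV_cmult deriv_normsq xd t)
    define e where "e i = x i t - z" for i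
    have ex: "x j t - x i t = e j - e i" for i j unfolding e_def by simp
    have split: "(\<Sum>i\<in>UNIV. p i * (2 * ((x i t - z) \<bullet> Rhs i t)))
      = (\<Sum>i\<in>UNIV. p i * (2 * (e i \<bullet> (\<Sum>j\<in>UNIV. a i j *\<^sub>R (e j - e i)))))
        - 2 * \<tau> * (\<Sum>i\<in>UNIV. p i * (e i \<bullet> g i (x i t)))"
      unfolding Rhs_def ex e_def[symmetric]
      by (simp add: inner_diff_right sum_subtractf sum_distrib_left sum.distrib algebra_simps)
    have gi: "e i \<bullet> g i (x i t) \<ge> Qf i (x i t)" for i
      unfolding e_def g_def Qf_def
      by (rule key_ineq[OF closedX convexX]) (use zF in \<open>auto simp: feasible_set_def\<close>)
    have "(\<Sum>i\<in>UNIV. p i * Qf i (x i t)) \<le> (\<Sum>i\<in>UNIV. p i * (e i \<bullet> g i (x i t)))"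
      by (rule sum_mono) (use gi ppos in \<open>auto intro: mult_left_mono less_imp_le\<close>)
    then have "2 * \<tau> * (\<Sum>i\<in>UNIV. p i * Qf i (x i t)) \<le> 2 * \<tau> * (\<Sum>i\<in>UNIV. p i * (e i \<bullet> g i (x i t)))"
      using tau_pos by simp
    moreover have "D (\<lambda>i. x i t) = (\<Sum>i\<in>UNIV. p i * (\<Sum>j\<in>UNIV. a i j * (norm (e j - e i))\<^sup>2))
       + 2 * \<tau> * (\<Sum>i\<in>UNIV. p i * Qf i (x i t))"
      unfolding D_def ex by (simp add: sum.distrib sum_distrib_left algebra_simps)
    ultimately show ?thesis using der split consensus_identity[of p a e, OF stat]
      by (intro exI[of _ "(\<Sum>i\<in>UNIV. p i * (2 * ((x i t - z) \<bullet> Rhs i t)))"]) auto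
  qed
  have Vmono: "V z t \<le> V z s" if "z \<in> feasible_set X m A b" "0 < s" "s \<le> t" for z s t
    by (rule DERIV_nonpos_imp_nonincreasing[OF \<open>s \<le> t\<close>])
       (use dV[OF that(1)] Dnn that in \<open>smt (verit)\<close>)
  have Vnn: "V z t \<ge> 0" for z t unfolding V_def
    by (intro sum_nonneg mult_nonneg_nonneg) (use ppos in \<open>auto simp: less_imp_le\<close>)
  have Vcomp: "p i * (norm (x i t - z))\<^sup>2 \<le> V z t" for i z t
    unfolding V_def by (rule member_le_sum) (use ppos in \<open>auto intro!: mult_nonneg_nonneg simp: less_imp_le\<close>)

  have dVz0: "\<exists>D'. DERIV (V z0) t :> D' \<and> D' \<le> - D (\<lambda>i. x i t)" if "t > 0" for t
    using dV[OF z0 that] .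
  define W where "W k = V z0 (real k + 1)" for k :: nat
  have Wdec: "decseq W" unfolding decseq_def W_def
    by (intro allI impI Vmono[OF z0]) auto
  have W0: "\<forall>i. 0 \<le> W i" unfolding W_def using Vnn by simp
  obtain L where WL: "W \<longlonglongrightarrow> L" using decseq_convergent[OF Wdec W0] by blast
  have Wdiff: "(\<lambda>k. W k - W (Suc k)) \<longlonglongrightarrow> 0"
    using tendsto_diff[OF WL LIMSEQ_Suc[OF WL]] by simp
  have sex: "\<exists>s. real k + 1 < s \<and> s < real k + 2 \<and> D (\<lambda>i. x i s) \<le> W k - W (Suc k)" for k
  proof -
    have lt: "real k + 1 < real k + 2" by simp
    have cont: "continuous_on {real k + 1 .. real k + 2} (V z0)"
    proof (rule continuous_at_imp_continuous_on, rule ballI)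
      fix y assume "y \<in> {real k + 1 .. real k + 2}"
      then have "y > 0" by auto
      then obtain D' where "DERIV (V z0) y :> D'" using dVz0 by blast
      then show "isCont (V z0) y" by (rule DERIV_isCont)
    qed
    have dif: "V z0 differentiable (at y)" if "real k + 1 < y" "y < real k + 2" for y
    proof -
      have "y > 0" using that by simp
      then obtain D' where "DERIV (V z0) y :> D'" using dVz0 by blast
      then show ?thesis unfolding differentiable_def has_field_derivative_def by blast
    qed
    obtain l y where y: "real k + 1 < y" "y < real k + 2" and dl: "DERIV (V z0) y :> l"
      and eq: "V z0 (real k + 2) - V z0 (real k + 1) = (real k + 2 - (real k + 1)) * l"
      using MVT[OF lt cont dif] by blast
    have "y > 0" using y by simp
    then obtain D' where dD: "DERIV (V z0) y :> D'" and D'le: "D' \<le> - D (\<lambda>i. x i y)" using dVz0 by blast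
    have "l = D'" using DERIV_unique[OF dl dD] .
    moreover have "W k - W (Suc k) = V z0 (real k + 1) - V z0 (real k + 2)"
      unfolding W_def by (simp add: add.assoc add.commute)
    ultimately have "D (\<lambda>i. x i y) \<le> W k - W (Suc k)" using eq D'le by simp
    then show ?thesis using y by blast
  qed
  obtain s where s1: "\<And>k. real k + 1 < s k" and s3: "\<And>k. D (\<lambda>i. x i (s k)) \<le> W k - W (Suc k)"
    using sex by metis
  have Ds0: "(\<lambda>k. D (\<lambda>i. x i (s k))) \<longlonglongrightarrow> 0"
    by (rule real_tendsto_sandwich[of "\<lambda>_. 0" _ _ "\<lambda>k. W k - W (Suc k)"])
       (auto simp: Dnn s3 Wdiff)
  have xb: "norm (x i t) \<le> norm z0 + sqrt (V z0 1 / p i)" if "t \<ge> 1" for i t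
  proof -
    have "p i * (norm (x i t - z0))\<^sup>2 \<le> V z0 1"
      using Vcomp[of i t z0] Vmono[OF z0, of 1 t] that by linarith
    then have "(norm (x i t - z0))\<^sup>2 \<le> V z0 1 / p i" using ppos[of i] by (simp add: field_simps)
    then have "norm (x i t - z0) \<le> sqrt (V z0 1 / p i)" by (rule real_le_rsqrt)
    moreover have "norm (x i t) \<le> norm z0 + norm (x i t - z0)" by (rule norm_triangle_sub)
    ultimately show ?thesis by linarith
  qed
  define Y where "Y k = (\<chi> i. x i (s k))" for k
  have "bounded (range Y)"
  proof -
    have "norm (Y k) \<le> (\<Sum>i\<in>UNIV. norm z0 + sqrt (V z0 1 / p i))" for k
    proof -
      have "norm (Y k) = L2_set (\<lambda>i. norm (x i (s k))) UNIV" unfolding Y_def norm_vec_def by simp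
      also have "\<dots> \<le> (\<Sum>i\<in>UNIV. norm (x i (s k)))" by (rule L2_set_le_sum) auto
      also have "\<dots> \<le> (\<Sum>i\<in>UNIV. norm z0 + sqrt (V z0 1 / p i))"
        by (rule sum_mono, rule xb) (use s1[of k] in simp)
      finally show ?thesis .
    qed
    then show ?thesis unfolding bounded_iff by blast
  qed
  then obtain l r where r: "strict_mono r" and Yl: "(Y \<circ> r) \<longlonglongrightarrow> l"
    using bounded_imp_convergent_subsequence by blast
  define ybar where "ybar i = l $ i" for i
  have xl: "(\<lambda>k. x i (s (r k))) \<longlonglongrightarrow> ybar i" for i
    using tendsto_vec_nth[OF Yl, of i] unfolding Y_def ybar_def by (simp add: o_def)
  have cp_t: "((\<lambda>k. closest_point (X i) (f k)) \<longlongrightarrow> closest_point (X i) c) F"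
    if "(f \<longlongrightarrow> c) F" for i f c and F :: "nat filter"
    by (rule isCont_tendsto_compose[OF continuous_at_closest_point[OF convexX closedX Xne] that])
  have Dl: "(\<lambda>k. D (\<lambda>i. x i (s (r k)))) \<longlonglongrightarrow> D ybar"
    unfolding D_def Qf_def mat_row_app_def by (intro tendsto_intros cp_t xl)
  have D0: "D ybar = 0"
    using LIMSEQ_unique[OF Dl] LIMSEQ_subseq_LIMSEQ[OF Ds0 r] by (simp add: o_def)
  have termz: "(\<Sum>j\<in>UNIV. a i j * (norm (ybar j - ybar i))\<^sup>2) + 2 * \<tau> * Qf i (ybar i) = 0" for i
  proof -
    have nn: "\<forall>i\<in>UNIV. 0 \<le> p i * ((\<Sum>j\<in>UNIV. a i j * (norm (ybar j - ybar i))\<^sup>2) + 2 * \<tau> * Qf i (ybar i))"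
      by (intro ballI mult_nonneg_nonneg add_nonneg_nonneg sum_nonneg)
         (use ppos tau_pos Qnn a_nonneg in \<open>auto simp: less_imp_le\<close>)
    have "\<forall>i\<in>UNIV. p i * ((\<Sum>j\<in>UNIV. a i j * (norm (ybar j - ybar i))\<^sup>2) + 2 * \<tau> * Qf i (ybar i)) = 0"
      by (rule sum_nonneg_eq_0_iff[THEN iffD1]) (use D0 nn in \<open>auto simp: D_def\<close>)
    then have "p i * ((\<Sum>j\<in>UNIV. a i j * (norm (ybar j - ybar i))\<^sup>2) + 2 * \<tau> * Qf i (ybar i)) = 0"
      by blast
    then show ?thesis using ppos[of i] by simp
  qed
  have sumz: "(\<Sum>j\<in>UNIV. a i j * (norm (ybar j - ybar i))\<^sup>2) = 0" and Qz: "Qf i (ybar i) = 0" for i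
  proof -
    have "(\<Sum>j\<in>UNIV. a i j * (norm (ybar j - ybar i))\<^sup>2) \<ge> 0"
      using a_nonneg by (auto intro!: sum_nonneg)
    moreover have "2 * \<tau> * Qf i (ybar i) \<ge> 0" using tau_pos Qnn[of i] by simp
    ultimately have t1: "(\<Sum>j\<in>UNIV. a i j * (norm (ybar j - ybar i))\<^sup>2) = 0"
      and t2: "2 * \<tau> * Qf i (ybar i) = 0"
      using termz[of i] by linarith+
    from t1 show "(\<Sum>j\<in>UNIV. a i j * (norm (ybar j - ybar i))\<^sup>2) = 0" .
    from t2 show "Qf i (ybar i) = 0" using tau_pos by simp
  qed
  have edge: "ybar j = ybar i" if "a i j > 0" for i j
  proof -
    have "\<forall>j\<in>UNIV. a i j * (norm (ybar j - ybar i))\<^sup>2 = 0"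
      using sumz[of i] a_nonneg by (subst sum_nonneg_eq_0_iff[symmetric]) auto
    then show ?thesis using that by (simp, metis less_irrefl)
  qed
  define i0 :: 'n where "i0 = undefined"
  define yb where "yb = ybar i0"
  have alleq: "ybar w = yb" for w
  proof -
    have "(i0, w) \<in> {(u, v). a v u > 0}\<^sup>*" using strong unfolding strongly_connected_def by blast
    then show ?thesis
    proof (induction rule: rtrancl_induct)
      case base then show ?case by (simp add: yb_def)
    next
      case (step u v) then show ?case using edge[of v u] by auto
    qed
  qed
  have ybF: "yb \<in> feasible_set X m A b"
  proof -
    have "yb \<in> X i" and "\<forall>k<m i. mat_row_app (A i) yb k - b i k \<le> 0" for i
    proof -
      have Q: "Qf i yb = 0" using Qz[of i] alleq by simp
      have n1: "(\<Sum>k<m i. (max (mat_row_app (A i) yb k - b i k) 0)\<^sup>2) \<ge> 0" by (auto intro: sum_nonneg)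
      have n2: "(norm (yb - closest_point (X i) yb))\<^sup>2 \<ge> 0" by simp
      have z1: "(\<Sum>k<m i. (max (mat_row_app (A i) yb k - b i k) 0)\<^sup>2) = 0"
        and z2: "(norm (yb - closest_point (X i) yb))\<^sup>2 = 0"
        using Q n1 n2 unfolding Qf_def by linarith+
      from z2 have "yb = closest_point (X i) yb" by simp
      then show "yb \<in> X i" using closest_point_in_set[OF closedX Xne, of i yb] by simp
      have "\<forall>k\<in>{..<m i}. (max (mat_row_app (A i) yb k - b i k) 0)\<^sup>2 = 0"
        using z1 by (subst sum_nonneg_eq_0_iff[symmetric]) auto
      then show "\<forall>k<m i. mat_row_app (A i) yb k - b i k \<le> 0" by (auto simp: max_def split: if_splits)
    qed
    then show ?thesis unfolding feasible_set_def by auto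
  qed
  have Vlim: "(\<lambda>k. V yb (s (r k))) \<longlonglongrightarrow> 0"
  proof -
    have "(\<lambda>k. V yb (s (r k))) \<longlonglongrightarrow> (\<Sum>i\<in>UNIV. p i * (norm (ybar i - yb))\<^sup>2)"
      unfolding V_def by (intro tendsto_intros xl)
    then show ?thesis using alleq by simp
  qed
  have "(x i \<longlongrightarrow> yb) at_top" for i
  proof (rule tendstoI)
    fix \<epsilon> :: real assume ep: "\<epsilon> > 0"
    have "p i * \<epsilon>\<^sup>2 > 0" using ep ppos[of i] by simp
    then have "eventually (\<lambda>k. V yb (s (r k)) < p i * \<epsilon>\<^sup>2) sequentially"
      using order_tendstoD(2)[OF Vlim] by blast
    then obtain K where K: "V yb (s (r K)) < p i * \<epsilon>\<^sup>2" unfolding eventually_sequentially by blast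
    have "dist (x i t) yb < \<epsilon>" if "t \<ge> s (r K)" for t
    proof -
      have "s (r K) > 0" using s1[of "r K"] by simp
      then have "V yb t \<le> V yb (s (r K))" using Vmono[OF ybF _ that] by blast
      then have "p i * (norm (x i t - yb))\<^sup>2 < p i * \<epsilon>\<^sup>2" using Vcomp[of i t yb] K by linarith
      then have "(norm (x i t - yb))\<^sup>2 < \<epsilon>\<^sup>2" using ppos[of i] by simp
      then have "norm (x i t - yb) < \<epsilon>" using ep by (simp add: power_less_imp_less_base less_imp_le)
      then show ?thesis by (simp add: dist_norm)
    qed
    then show "eventually (\<lambda>t. dist (x i t) yb < \<epsilon>) at_top"
      unfolding eventually_at_top_linorder by blast
  qed
  then show ?thesis using ybF by blast
qed

end
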